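(* For all record types $\rho,\rho_1,\rho_2,\rho_3\in\mathbb{T}_R$: (1) if $\rho_1=\rho_2$ then $\mathit{lbl}(\rho_1)=\mathit{lbl}(\rho_2)$; (2) if $\mathit{lbl}(\rho_1)\cap\mathit{lbl}(\rho_2)=\emptyset$ then $\rho_1+\rho_2=\rho_1\cap\rho_2$; (3) if $\mathit{lbl}(\rho_1)\subseteq\mathit{lbl}(\rho_2)$ then $\rho_1+\rho_2=\rho_2$; (4) if $\mathit{lbl}(\rho_2)=\mathit{lbl}(\rho_3)$ then $(\rho_1+\rho_2)\cap(\rho_1+\rho_3)=\rho_1+(\rho_2\cap\rho_3)$.
   Context: $\mathbb{T}\ni\sigma ::= a\mid\omega\mid\sigma_1\to\sigma_2\mid\sigma_1\cap\sigma_2\mid\rho$ and record types $\mathbb{T}_R\ni\rho ::= \langle\rangle\mid\langle l:\sigma\rangle\mid\rho_1+\rho_2\mid\rho_1\cap\rho_2$. Subtyping $\le$ is the least preorder with: $\sigma\le\omega$; $\omega\le\omega\to\omega$; $\sigma\cap\tau\le\sigma$; $\sigma\cap\tau\le\tau$; $\sigma\le\tau_1,\sigma\le\tau_2\Rightarrow\sigma\le\tau_1\cap\tau_2$; $(\sigma\to\tau_1)\cap(\sigma\to\tau_2)\le\sigma\to\tau_1\cap\tau_2$; $\sigma_2\le\sigma_1,\tau_1\le\tau_2\Rightarrow\sigma_1\to\tau_1\le\sigma_2\to\tau_2$; $\langle l:\sigma\rangle\le\langle\rangle$; $\langle l:\sigma\rangle\cap\langle l:\tau\rangle\le\langle l:\sigma\cap\tau\rangle$;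 $\sigma\le\tau\Rightarrow\langle l:\sigma\rangle\le\langle l:\tau\rangle$; $\rho+\langle\rangle=\langle\rangle+\rho=\rho$; $(\rho_1+\rho_2)+\rho_3=\rho_1+(\rho_2+\rho_3)$; $(\rho_1\cap\rho_2)+\rho_3=(\rho_1+\rho_3)\cap(\rho_2+\rho_3)$; $\langle l:\sigma\rangle+(\langle l:\tau\rangle\cap\rho)=\langle l:\tau\rangle\cap\rho$; $\langle l:\sigma\rangle+(\langle l':\tau\rangle\cap\rho)=\langle l':\tau\rangle\cap(\langle l:\sigma\rangle+\rho)$ if $l\neq l'$; $\rho_1\le\rho_2\Rightarrow\rho_1+\rho\le\rho_2+\rho$; $\rho_1=\rho_2\Rightarrow\rho+\rho_1=\rho+\rho_2$. $=$ means $\le$ in both directions. The label map on record types: $\mathit{lbl}(\langle\rangle)=\emptyset$, $\mathit{lbl}(\langle l:\sigma\rangle)=\{l\}$, $\mathit{lbl}(\rho_1\cap\rho_2)=\mathit{lbl}(\rho_1+\rho_2)=\mathit{lbl}(\rho_1)\cup\mathit{lbl}(\rho_2)$. *)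

theory Defs
  imports Main
begin

datatype ('a, 'l) ty =
    Atom 'a
  | Omega
  | Arr "('a, 'l) ty" "('a, 'l) ty"
  | Inter "('a, 'l) ty" "('a, 'l) ty"
  | REmpty
  | RField 'l "('a, 'l) ty"
  | RMerge "('a, 'l) ty" "('a, 'l) ty"

inductive is_rec :: "('a, 'l) ty \<Rightarrow> bool" where
  "is_rec REmpty"
| "is_rec (RField l s)"
| "is_rec r1 \<Longrightarrow> is_rec r2 \<Longrightarrow> is_rec (RMerge r1 r2)"
| "is_rec r1 \<Longrightarrow> is_rec r2 \<Longrightarrow> is_rec (Inter r1 r2)"

fun lbl :: "('a, 'l) ty \<Rightarrow> 'l set" where
  "lbl REmpty = {}"
| "lbl (RField l s) = {l}"
| "lbl (Inter r1 r2) = lbl r1 \<union> lbl r2"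
| "lbl (RMerge r1 r2) = lbl r1 \<union> lbl r2"
| "lbl _ = {}"

text \<open>Subtyping: the least preorder closed under the listed rules.
Equations r = r' of the paper contribute both directions.\<close>

inductive sub :: "('a, 'l) ty \<Rightarrow> ('a, 'l) ty \<Rightarrow> bool" where
  refl: "sub s s"
| trans: "sub s t \<Longrightarrow> sub t u \<Longrightarrow> sub s u"
| omega: "sub s Omega"
| omega_arr: "sub Omega (Arr Omega Omega)"
| inter_l: "sub (Inter s t) s"
| inter_r: "sub (Inter s t) t"
| inter_glb: "sub s t1 \<Longrightarrow> sub s t2 \<Longrightarrow> sub s (Inter t1 t2)"
| arr_inter: "sub (Inter (Arr s t1) (Arr s t2)) (Arr s (Inter t1 t2))"
| arr: "sub s2 s1 \<Longrightarrow> sub t1 t2 \<Longrightarrow> sub (Arr s1 t1) (Arr s2 t2)"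
| field_empty: "sub (RField l s) REmpty"
| field_inter: "sub (Inter (RField l s) (RField l t)) (RField l (Inter s t))"
| field_mono: "sub s t \<Longrightarrow> sub (RField l s) (RField l t)"
| merge_empty_r1: "is_rec r \<Longrightarrow> sub (RMerge r REmpty) r"
| merge_empty_r2: "is_rec r \<Longrightarrow> sub r (RMerge r REmpty)"
| merge_empty_l1: "is_rec r \<Longrightarrow> sub (RMerge REmpty r) r"
| merge_empty_l2: "is_rec r \<Longrightarrow> sub r (RMerge REmpty r)"
| merge_assoc1: "is_rec r1 \<Longrightarrow> is_rec r2 \<Longrightarrow> is_rec r3 \<Longrightarrow>
    sub (RMerge (RMerge r1 r2) r3) (RMerge r1 (RMerge r2 r3))"
| merge_assoc2: "is_rec r1 \<Longrightarrow> is_rec r2 \<Longrightarrow> is_rec r3 \<Longrightarrow>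
    sub (RMerge r1 (RMerge r2 r3)) (RMerge (RMerge r1 r2) r3)"
| merge_distr1: "is_rec r1 \<Longrightarrow> is_rec r2 \<Longrightarrow> is_rec r3 \<Longrightarrow>
    sub (RMerge (Inter r1 r2) r3) (Inter (RMerge r1 r3) (RMerge r2 r3))"
| merge_distr2: "is_rec r1 \<Longrightarrow> is_rec r2 \<Longrightarrow> is_rec r3 \<Longrightarrow>
    sub (Inter (RMerge r1 r3) (RMerge r2 r3)) (RMerge (Inter r1 r2) r3)"
| merge_same1: "is_rec r \<Longrightarrow>
    sub (RMerge (RField l s) (Inter (RField l t) r)) (Inter (RField l t) r)"
| merge_same2: "is_rec r \<Longrightarrow>
    sub (Inter (RField l t) r) (RMerge (RField l s) (Inter (RField l t) r))"
| merge_diff1: "is_rec r \<Longrightarrow> l \<noteq> l' \<Longrightarrow>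
    sub (RMerge (RField l s) (Inter (RField l' t) r)) (Inter (RField l' t) (RMerge (RField l s) r))"
| merge_diff2: "is_rec r \<Longrightarrow> l \<noteq> l' \<Longrightarrow>
    sub (Inter (RField l' t) (RMerge (RField l s) r)) (RMerge (RField l s) (Inter (RField l' t) r))"
| merge_mono: "is_rec r1 \<Longrightarrow> is_rec r2 \<Longrightarrow> is_rec r \<Longrightarrow> sub r1 r2 \<Longrightarrow>
    sub (RMerge r1 r) (RMerge r2 r)"
| merge_cong1: "is_rec r1 \<Longrightarrow> is_rec r2 \<Longrightarrow> is_rec r \<Longrightarrow> sub r1 r2 \<Longrightarrow> sub r2 r1 \<Longrightarrow>
    sub (RMerge r r1) (RMerge r r2)"
| merge_cong2: "is_rec r1 \<Longrightarrow> is_rec r2 \<Longrightarrow> is_rec r \<Longrightarrow> sub r1 r2 \<Longrightarrow> sub r2 r1 \<Longrightarrow>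
    sub (RMerge r r2) (RMerge r r1)"

definition teq :: "('a, 'l) ty \<Rightarrow> ('a, 'l) ty \<Rightarrow> bool" where
  "teq s t \<longleftrightarrow> sub s t \<and> sub t s"

end

theory Submission
  imports Defs
begin

lemma lbl_sub: "sub s t \<Longrightarrow> lbl t \<subseteq> lbl s"
  by (induction rule: sub.induct) auto

lemma teq_refl: "teq s s" by (simp add: teq_def sub.refl)
lemma teq_sym: "teq s t \<Longrightarrow> teq t s" by (simp add: teq_def)
lemma teq_trans: "teq s t \<Longrightarrow> teq t u \<Longrightarrow> teq s u"
  unfolding teq_def by (meson sub.trans)

lemma sub_inter_mono: "sub a a' \<Longrightarrow> sub b b' \<Longrightarrow> sub (Inter a b) (Inter a' b')"
  by (meson sub.inter_glb sub.inter_l sub.inter_r sub.trans)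

lemma teq_inter: "teq a a' \<Longrightarrow> teq b b' \<Longrightarrow> teq (Inter a b) (Inter a' b')"
  unfolding teq_def using sub_inter_mono by blast

lemma teq_merge: "is_rec r1 \<Longrightarrow> is_rec r1' \<Longrightarrow> is_rec r2 \<Longrightarrow> is_rec rh2 \<Longrightarrow>
  teq r1 r1' \<Longrightarrow> teq r2 rh2 \<Longrightarrow> teq (RMerge r1 r2) (RMerge r1' rh2)"
  unfolding teq_def by (meson sub.merge_mono sub.merge_cong1 sub.trans)

fun nf :: "('l \<times> ('a, 'l) ty) list \<Rightarrow> ('a, 'l) ty" where
  "nf [] = REmpty"
| "nf ((l, s) # xs) = Inter (RField l s) (nf xs)"

lemma nf_rec: "is_rec (nf xs)"
  by (induction xs rule: nf.induct) (auto intro: is_rec.intros)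

lemma nf_empty: "sub (nf xs) REmpty"
  by (induction xs rule: nf.induct) (auto intro: sub.intros)

lemma nf_mem: "(l, s) \<in> set xs \<Longrightarrow> sub (nf xs) (RField l s)"
  by (induction xs rule: nf.induct) (auto intro: sub.intros)

lemma nf_lower: "(\<forall>p\<in>set zs. sub t (RField (fst p) (snd p))) \<Longrightarrow> sub t REmpty \<Longrightarrow> sub t (nf zs)"
  by (induction zs rule: nf.induct) (auto intro: sub.intros)

lemma nf_set_sub: "set ys \<subseteq> set xs \<Longrightarrow> sub (nf xs) (nf ys)"
proof (rule nf_lower)
  assume "set ys \<subseteq> set xs"
  then show "\<forall>p\<in>set ys. sub (nf xs) (RField (fst p) (snd p))"
    using nf_mem by (metis prod.collapse subsetD)
qed (rule nf_empty)

lemma nf_set: "set ys = set xs \<Longrightarrow> teq (nf xs) (nf ys)"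
  unfolding teq_def by (simp add: nf_set_sub)

lemma nf_inter: assumes c: "set c = set a \<union> set b"
  shows "teq (Inter (nf a) (nf b)) (nf c)"
  unfolding teq_def
proof
  show "sub (Inter (nf a) (nf b)) (nf c)"
  proof (rule nf_lower)
    show "\<forall>p\<in>set c. sub (Inter (nf a) (nf b)) (RField (fst p) (snd p))"
    proof
      fix p assume "p \<in> set c"
      then have "(fst p, snd p) \<in> set a \<or> (fst p, snd p) \<in> set b" using c by auto
      then show "sub (Inter (nf a) (nf b)) (RField (fst p) (snd p))"
        by (meson nf_mem sub.inter_l sub.inter_r sub.trans)
    qed
    show "sub (Inter (nf a) (nf b)) REmpty"
      by (rule sub.trans[OF sub.inter_l nf_empty])
  qed
  show "sub (nf c) (Inter (nf a) (nf b))"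
    using c by (auto intro!: sub.inter_glb nf_set_sub)
qed

lemma teq_rfield: "teq (RField l s) (nf [(l, s)])"
  unfolding teq_def by (auto intro: sub.intros)

lemma key: "teq (RMerge (RField l s) (nf ys))
  (if l \<in> fst ` set ys then nf ys else nf ((l, s) # ys))"
proof (induction ys)
  case Nil
  have "teq (RMerge (RField l s) REmpty) (RField l s)"
    unfolding teq_def by (auto intro: sub.intros is_rec.intros)
  then show ?case using teq_trans[OF _ teq_rfield] by simp
next
  case (Cons p ys)
  obtain l' t where p: "p = (l', t)" by (cases p)
  show ?case
  proof (cases "l = l'")
    case True
    have "teq (RMerge (RField l s) (nf (p # ys))) (nf (p # ys))"
      unfolding teq_def p True by (auto intro: sub.intros nf_rec)
    then show ?thesis using True p by simp
  next
    case False
    have 1: "teq (RMerge (RField l s) (nf (p # ys))) (Inter (RField l' t) (RMerge (RField l s) (nf ys)))"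
      unfolding teq_def p using False by (auto intro: sub.merge_diff1 sub.merge_diff2 nf_rec)
    have 2: "teq (Inter (RField l' t) (RMerge (RField l s) (nf ys)))
      (Inter (RField l' t) (if l \<in> fst ` set ys then nf ys else nf ((l, s) # ys)))"
      by (rule teq_inter[OF teq_refl Cons.IH])
    show ?thesis
    proof (cases "l \<in> fst ` set ys")
      case True
      have h2: "teq (Inter (RField l' t) (RMerge (RField l s) (nf ys))) (nf (p # ys))"
        using 2 True p by simp
      then show ?thesis using teq_trans[OF 1 h2] True p by simp
    next
      assume nin: "l \<notin> fst ` set ys"
      have 3: "teq (nf ((l', t) # (l, s) # ys)) (nf ((l, s) # p # ys))"
        by (rule nf_set) (auto simp: p)
      have h2: "teq (Inter (RField l' t) (RMerge (RField l s) (nf ys))) (nf ((l', t) # (l, s) # ys))"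
        using 2 nin by simp
      show ?thesis using teq_trans[OF teq_trans[OF 1 h2] 3] nin False p by simp
    qed
  qed
qed

lemma merge_nf: "teq (RMerge (nf xs) (nf ys))
   (nf (filter (\<lambda>p. fst p \<notin> fst ` set ys) xs @ ys))"
proof (induction xs)
  case Nil
  then show ?case unfolding teq_def by (auto intro: sub.intros nf_rec)
next
  case (Cons p xs)
  obtain l s where p: "p = (l, s)" by (cases p)
  let ?xs' = "filter (\<lambda>p. fst p \<notin> fst ` set ys) xs"
  have 1: "teq (RMerge (nf (p # xs)) (nf ys))
    (Inter (RMerge (RField l s) (nf ys)) (RMerge (nf xs) (nf ys)))"
    unfolding teq_def p by (auto intro: sub.merge_distr1 sub.merge_distr2 nf_rec is_rec.intros)
  have 2: "teq (Inter (RMerge (RField l s) (nf ys)) (RMerge (nf xs) (nf ys)))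
     (Inter (if l \<in> fst ` set ys then nf ys else nf ((l, s) # ys)) (nf (?xs' @ ys)))"
    by (rule teq_inter[OF key Cons.IH])
  show ?case
  proof (cases "l \<in> fst ` set ys")
    case True
    have 3: "teq (Inter (nf ys) (nf (?xs' @ ys))) (nf (?xs' @ ys))"
      by (rule nf_inter) auto
    have h2: "teq (Inter (RMerge (RField l s) (nf ys)) (RMerge (nf xs) (nf ys))) (Inter (nf ys) (nf (?xs' @ ys)))"
      using 2 True by simp
    show ?thesis using teq_trans[OF teq_trans[OF 1 h2] 3] True p by simp
  next
    case False
    have 3: "teq (Inter (nf ((l, s) # ys)) (nf (?xs' @ ys))) (nf ((l, s) # ?xs' @ ys))"
      by (rule nf_inter) auto
    have h2: "teq (Inter (RMerge (RField l s) (nf ys)) (RMerge (nf xs) (nf ys))) (Inter (nf ((l, s) # ys)) (nf (?xs' @ ys)))"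
      using 2 False by simp
    show ?thesis using teq_trans[OF teq_trans[OF 1 h2] 3] False p by simp
  qed
qed

lemma normal_form: "is_rec r \<Longrightarrow> \<exists>xs. teq r (nf xs) \<and> fst ` set xs = lbl r"
proof (induction rule: is_rec.induct)
  case 1
  then show ?case by (intro exI[of _ "[]"]) (simp add: teq_refl)
next
  case (2 l s)
  then show ?case by (intro exI[of _ "[(l, s)]"]) (simp add: teq_rfield[simplified])
next
  case (3 r1 r2)
  then obtain xs ys where a: "teq r1 (nf xs)" "fst ` set xs = lbl r1"
    and b: "teq r2 (nf ys)" "fst ` set ys = lbl r2" by blast
  have "teq (RMerge r1 r2) (RMerge (nf xs) (nf ys))"
    using 3 a b by (intro teq_merge) (auto intro: nf_rec)
  from teq_trans[OF this merge_nf]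
  moreover have "fst ` set (filter (\<lambda>p. fst p \<notin> fst ` set ys) xs @ ys) = lbl (RMerge r1 r2)"
    using a b by (auto simp: image_iff) force
  ultimately show ?case by blast
next
  case (4 r1 r2)
  then obtain xs ys where a: "teq r1 (nf xs)" "fst ` set xs = lbl r1"
    and b: "teq r2 (nf ys)" "fst ` set ys = lbl r2" by blast
  have "teq (Inter r1 r2) (nf (xs @ ys))"
    using teq_trans[OF teq_inter[OF a(1) b(1)] nf_inter[of "xs @ ys"]] by simp
  then show ?case using a b by (intro exI[of _ "xs @ ys"]) auto
qed

theorem lemma3p10:
  fixes r r1 r2 r3 :: "('a, 'l) ty"
  assumes "is_rec r" and "is_rec r1" and "is_rec r2" and "is_rec r3"
  shows "(teq r1 r2 \<longrightarrow> lbl r1 = lbl r2)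
    \<and> (lbl r1 \<inter> lbl r2 = {} \<longrightarrow> teq (RMerge r1 r2) (Inter r1 r2))
    \<and> (lbl r1 \<subseteq> lbl r2 \<longrightarrow> teq (RMerge r1 r2) r2)
    \<and> (lbl r2 = lbl r3 \<longrightarrow> teq (Inter (RMerge r1 r2) (RMerge r1 r3)) (RMerge r1 (Inter r2 r3)))"
proof (intro conjI impI)
  obtain xs where x: "teq r1 (nf xs)" "fst ` set xs = lbl r1" using normal_form assms(2) by blast
  obtain ys where y: "teq r2 (nf ys)" "fst ` set ys = lbl r2" using normal_form assms(3) by blast
  obtain zs where z: "teq r3 (nf zs)" "fst ` set zs = lbl r3" using normal_form assms(4) by blast
  have m12: "teq (RMerge r1 r2) (RMerge (nf xs) (nf ys))"
    using assms x y by (intro teq_merge) (auto intro: nf_rec)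
  have m13: "teq (RMerge r1 r3) (RMerge (nf xs) (nf zs))"
    using assms x z by (intro teq_merge) (auto intro: nf_rec)
  show "teq r1 r2 \<Longrightarrow> lbl r1 = lbl r2"
    unfolding teq_def using lbl_sub by blast
  show "teq (RMerge r1 r2) (Inter r1 r2)" if d: "lbl r1 \<inter> lbl r2 = {}"
  proof -
    have f: "filter (\<lambda>p. fst p \<notin> fst ` set ys) xs = xs"
      using d x(2) y(2) by (auto intro!: filter_True)
    have "teq (RMerge r1 r2) (nf (xs @ ys))" using teq_trans[OF m12 merge_nf] f by simp
    moreover have "teq (nf (xs @ ys)) (Inter r1 r2)"
      by (rule teq_sym, rule teq_trans[OF teq_inter[OF x(1) y(1)] nf_inter]) simp
    ultimately show ?thesis by (rule teq_trans)
  qed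
  show "teq (RMerge r1 r2) r2" if d: "lbl r1 \<subseteq> lbl r2"
  proof -
    have f: "filter (\<lambda>p. fst p \<notin> fst ` set ys) xs = []"
      using d x(2) y(2) by (auto simp: filter_empty_conv)
    have "teq (RMerge r1 r2) (nf ys)" using teq_trans[OF m12 merge_nf] f by simp
    then show ?thesis using teq_trans teq_sym[OF y(1)] by blast
  qed
  show "teq (Inter (RMerge r1 r2) (RMerge r1 r3)) (RMerge r1 (Inter r2 r3))" if d: "lbl r2 = lbl r3"
  proof -
    let ?f = "filter (\<lambda>p. fst p \<notin> fst ` set ys) xs"
    have fz: "filter (\<lambda>p. fst p \<notin> fst ` set zs) xs = ?f" using d y(2) z(2) by simp
    have fyz: "filter (\<lambda>p. fst p \<notin> fst ` set (ys @ zs)) xs = ?f" using d y(2) z(2) by (simp add: image_Un)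
    have a: "teq (Inter (RMerge r1 r2) (RMerge r1 r3)) (Inter (nf (?f @ ys)) (nf (?f @ zs)))"
      using teq_inter[OF teq_trans[OF m12 merge_nf] teq_trans[OF m13 merge_nf]] fz by simp
    have b: "teq (Inter (nf (?f @ ys)) (nf (?f @ zs))) (nf (?f @ ys @ zs))"
      by (rule nf_inter) auto
    have i: "teq (Inter r2 r3) (nf (ys @ zs))"
      using teq_trans[OF teq_inter[OF y(1) z(1)] nf_inter[of "ys @ zs"]] by simp
    have c: "teq (RMerge r1 (Inter r2 r3)) (RMerge (nf xs) (nf (ys @ zs)))"
      using assms x i by (intro teq_merge) (auto intro: nf_rec is_rec.intros)
    have e: "teq (RMerge r1 (Inter r2 r3)) (nf (?f @ ys @ zs))"
      using teq_trans[OF c merge_nf] fyz by simp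
    show ?thesis by (rule teq_trans[OF teq_trans[OF a b] teq_sym[OF e]])
  qed
qed

end
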